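(* Let $\{s_1,\dots,s_n\}\subset\mathbb{S}^{d-1}$ be $\eta$-dense with $\eta\le1/8$, and let $A\in\mathbb{R}^{n\times d}$ have rows $a_1,\dots,a_n$ with $\|a_i-s_i\|\le\eta$ for every $i\in[n]$. For every $b\in[1-\eta,1+\eta]^n$, \[ (1-2\eta)\mathbb{B}_2^d\subseteq\{x\in\mathbb{R}^d:Ax\le b\}\subseteq(1+4\eta)\mathbb{B}_2^d. \]
   Context: A set $S\subset\mathbb{S}^{d-1}$ is $\eta$-dense if for every $x\in\mathbb{S}^{d-1}$ there is $s\in S$ with $\|x-s\|\le\eta$. $\mathbb{B}_2^d$ is the closed Euclidean unit ball. *)

theory Defs
  imports "HOL-Analysis.Analysis"
begin

definition eta_dense :: "real \<Rightarrow> ('a::real_normed_vector) set \<Rightarrow> bool" where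
  "eta_dense \<eta> S \<longleftrightarrow> S \<subseteq> sphere 0 1 \<and>
     (\<forall>x \<in> sphere 0 1. \<exists>s \<in> S. norm (x - s) \<le> \<eta>)"

end

theory Submission
  imports Defs
begin

theorem lemma5p3:
  fixes n :: nat and \<eta> :: real
    and s :: "nat \<Rightarrow> real ^ 'd" and a :: "nat \<Rightarrow> real ^ 'd"
    and b :: "nat \<Rightarrow> real"
  assumes dense: "eta_dense \<eta> (s ` {..<n})"
    and eta: "\<eta> \<le> 1/8"
    and rows: "\<forall>i<n. norm (a i - s i) \<le> \<eta>"
    and b: "\<forall>i<n. 1 - \<eta> \<le> b i \<and> b i \<le> 1 + \<eta>"
  shows "cball 0 (1 - 2*\<eta>) \<subseteq> {x. \<forall>i<n. a i \<bullet> x \<le> b i}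
       \<and> {x. \<forall>i<n. a i \<bullet> x \<le> b i} \<subseteq> cball 0 (1 + 4*\<eta>)"
proof
  have sph: "\<And>i. i < n \<Longrightarrow> norm (s i) = 1" using dense unfolding eta_dense_def by auto
  have na: "norm (a i) \<le> 1 + \<eta>" if "i < n" for i
  proof -
    have "norm (a i) \<le> norm (a i - s i) + norm (s i)" using norm_triangle_ineq[of "a i - s i" "s i"] by simp
    then show ?thesis using rows sph that by fastforce
  qed
  show "cball 0 (1 - 2*\<eta>) \<subseteq> {x. \<forall>i<n. a i \<bullet> x \<le> b i}"
  proof (safe)
    fix x :: "real^'d" and i assume x: "x \<in> cball 0 (1 - 2*\<eta>)" and i: "i < n"
    have nx: "norm x \<le> 1 - 2*\<eta>" using x by auto
    have "a i \<bullet> x \<le> norm (a i) * norm x" by (rule norm_cauchy_schwarz)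
    also have "\<dots> \<le> (1 + \<eta>) * (1 - 2*\<eta>)"
      by (rule mult_mono[OF na[OF i] nx]) (use na[OF i] norm_ge_zero[of "a i"] in linarith, simp)
    also have "\<dots> \<le> 1 - \<eta>" by (simp add: algebra_simps)
    also have "\<dots> \<le> b i" using b i by auto
    finally show "a i \<bullet> x \<le> b i" .
  qed
  show "{x. \<forall>i<n. a i \<bullet> x \<le> b i} \<subseteq> cball 0 (1 + 4*\<eta>)"
  proof
    fix x :: "real^'d" assume x: "x \<in> {x. \<forall>i<n. a i \<bullet> x \<le> b i}"
    show "x \<in> cball 0 (1 + 4*\<eta>)"
    proof (cases "x = 0")
      case True
      obtain v :: "real^'d" where "norm v = 1" using vector_choose_size[of 1] by auto
      then obtain j where "j < n" "norm (v - s j) \<le> \<eta>"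
        using dense unfolding eta_dense_def by fastforce
      then have "\<eta> \<ge> 0" using norm_ge_zero order_trans by blast
      then show ?thesis using True by simp
    next
      case False
      define r where "r = norm x"
      have r: "r > 0" using False r_def by auto
      define u where "u = x /\<^sub>R r"
      have nu: "norm u = 1" using r r_def u_def by auto
      then obtain i where i: "i < n" and ui: "norm (u - s i) \<le> \<eta>"
        using dense nu unfolding eta_dense_def by fastforce
      have e0: "\<eta> \<ge> 0" using ui norm_ge_zero order_trans by blast
      have "u \<bullet> u - (u - s i) \<bullet> u = s i \<bullet> u" by (simp add: inner_diff_left inner_diff_right inner_commute)
      moreover have "(u - s i) \<bullet> u \<le> \<eta>"
        using norm_cauchy_schwarz[of "u - s i" u] nu ui by auto
      moreover have "u \<bullet> u = 1" using nu by (simp add: dot_square_norm)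
      ultimately have su: "s i \<bullet> u \<ge> 1 - \<eta>" by linarith
      have "(a i - s i) \<bullet> u \<ge> - \<eta>"
      proof -
        have "\<bar>(a i - s i) \<bullet> u\<bar> \<le> norm (a i - s i) * norm u" by (rule Cauchy_Schwarz_ineq2)
        then show ?thesis using rows i nu by auto
      qed
      then have au: "a i \<bullet> u \<ge> 1 - 2*\<eta>" using su by (simp add: inner_diff_left)
      have "a i \<bullet> x = r * (a i \<bullet> u)" using r u_def by simp
      moreover have "a i \<bullet> x \<le> b i" using x i by blast
      moreover have "r * (1 - 2*\<eta>) \<le> r * (a i \<bullet> u)" using mult_left_mono[OF au, of r] r by simp
      ultimately have "r * (1 - 2*\<eta>) \<le> 1 + \<eta>" using b i by fastforce
      moreover have "1 + \<eta> \<le> (1 + 4*\<eta>) * (1 - 2*\<eta>)"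
      proof -
        have "0 \<le> \<eta> * (1 - 8*\<eta>)" using eta e0 by simp
        then show ?thesis by (simp add: algebra_simps)
      qed
      ultimately have "r * (1 - 2*\<eta>) \<le> (1 + 4*\<eta>) * (1 - 2*\<eta>)" by linarith
      moreover have "1 - 2*\<eta> > 0" using eta by simp
      ultimately have "r \<le> 1 + 4*\<eta>" by (rule mult_right_le_imp_le)
      then show ?thesis using r_def by simp
    qed
  qed
qed

end
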